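(* Let $p\ge 2$, let $\boldsymbol{S}$ be a $p\times p$ symmetric positive semidefinite matrix, let $\rho>0$, and let $k$ be an integer with $0\le k\le \binom{p}{2}$. For positive definite $\boldsymbol{\Sigma}$ put $f(\boldsymbol{\Sigma})=\ln\det\boldsymbol{\Sigma}+\mathrm{tr}(\boldsymbol{\Sigma}^{-1}\boldsymbol{S})$ and $h_\rho(\boldsymbol{\Sigma})=f(\boldsymbol{\Sigma})+\frac{\rho}{2}\mathrm{dist}(\boldsymbol{\Sigma},\mathcal{C})^2$, where $\mathcal{C}=\{\boldsymbol{A}\in\mathbb{R}^{p\times p}:\boldsymbol{A}=\boldsymbol{A}^T,\ \|\boldsymbol{A}\|_0\le 2k+p\}$ and $\mathrm{dist}$ is Frobenius distance. Let $\boldsymbol{\Sigma}_k\succ\boldsymbol{0}$, let $\boldsymbol{\Theta}_k\in P_{\mathcal{C}}(\boldsymbol{\Sigma}_k)$, and let $\widehat{\boldsymbol{\Sigma}}$ be the unique solution of the Sylvester equation $$\rho\,\widehat{\boldsymbol{\Sigma}}+\boldsymbol{\Sigma}_k^{-1}\widehat{\boldsymbol{\Sigma}}\boldsymbol{\Sigma}_k^{-1}=\rho\,\boldsymbol{\Theta}_k+\boldsymbol{\Sigma}_k^{-1}\boldsymbol{S}\boldsymbol{\Sigma}_k^{-1}.$$ If $\boldsymbol{\Sigma}_k$ is not a stationary point of $h_\rho$, then there exists an integer $s\ge 0$ such that $\boldsymbol{\Sigma}_{k+1}=\boldsymbol{\Sigma}_k+2^{-s}(\widehat{\boldsymbol{\Sigma}}-\boldsymbol{\Sigma}_k)$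 satisfies $\boldsymbol{\Sigma}_{k+1}\succ\boldsymbol{0}$ and $h_\rho(\boldsymbol{\Sigma}_{k+1})<h_\rho(\boldsymbol{\Sigma}_k)$.
   Context: $\|\boldsymbol{A}\|_0$ is the number of nonzero entries of $\boldsymbol{A}$. $P_{\mathcal{C}}(\boldsymbol{\Sigma})$ denotes the (possibly multi-valued) set of Frobenius-nearest points of $\mathcal{C}$ to $\boldsymbol{\Sigma}$ (obtained by keeping the diagonal and the $k$ largest-magnitude upper-triangular entries, mirrored symmetrically, and zeroing the rest). $\widehat{\boldsymbol{\Sigma}}$ is the minimizer of the quadratic surrogate $q_\rho(\boldsymbol{\Sigma}\mid\boldsymbol{\Sigma}_k)=f(\boldsymbol{\Sigma}_k)+\mathrm{tr}[\boldsymbol{\Sigma}_k^{-1}(\boldsymbol{\Sigma}-\boldsymbol{\Sigma}_k)]-\mathrm{tr}[\boldsymbol{\Sigma}_k^{-1}\boldsymbol{S}\boldsymbol{\Sigma}_k^{-1}(\boldsymbol{\Sigma}-\boldsymbol{\Sigma}_k)]+\frac12\mathrm{tr}[\boldsymbol{\Sigma}_k^{-1}(\boldsymbol{\Sigma}-\boldsymbol{\Sigma}_k)\boldsymbol{\Sigma}_k^{-1}(\boldsymbol{\Sigma}-\boldsymbol{\Sigma}_k)]+\frac{\rho}{2}\|\boldsymbol{\Sigma}-\boldsymbol{\Theta}_k\|_F^2$. A positive definite $\boldsymbol{\Sigma}$ is called a stationary point of $h_\rho$ if $\boldsymbol{\Sigma}^{-1}-\boldsymbol{\Sigma}^{-1}\boldsymbol{S}\boldsymbol{\Sigma}^{-1}+\rho(\boldsymbol{\Sigma}-\boldsymbol{\Theta})=\boldsymbol{0}$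 for some $\boldsymbol{\Theta}\in P_{\mathcal{C}}(\boldsymbol{\Sigma})$. *)

theory Defs
  imports "HOL-Analysis.Analysis"
begin

type_synonym 'n mat = "real^'n^'n"

definition sym_mat :: "'n::finite mat \<Rightarrow> bool" where
  "sym_mat A \<longleftrightarrow> transpose A = A"

definition pos_def :: "'n::finite mat \<Rightarrow> bool" where
  "pos_def A \<longleftrightarrow> sym_mat A \<and> (\<forall>x::real^'n. x \<noteq> 0 \<longrightarrow> x \<bullet> (A *v x) > 0)"

definition pos_semidef :: "'n::finite mat \<Rightarrow> bool" where
  "pos_semidef A \<longleftrightarrow> sym_mat A \<and> (\<forall>x::real^'n. x \<bullet> (A *v x) \<ge> 0)"

definition nnz :: "'n::finite mat \<Rightarrow> nat" where
  "nnz A = card {(i,j). A$i$j \<noteq> 0}"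

definition frob :: "'n::finite mat \<Rightarrow> real" where
  "frob A = sqrt (\<Sum>i\<in>UNIV. \<Sum>j\<in>UNIV. (A$i$j)^2)"

definition frob_dist :: "'n::finite mat \<Rightarrow> 'n mat \<Rightarrow> real" where
  "frob_dist A B = frob (A - B)"

definition C_set :: "nat \<Rightarrow> 'n::finite mat set" where
  "C_set k = {A. sym_mat A \<and> nnz A \<le> 2*k + CARD('n)}"

definition dist_C :: "nat \<Rightarrow> 'n::finite mat \<Rightarrow> real" where
  "dist_C k S = (INF A\<in>C_set k. frob_dist S A)"

definition proj_C :: "nat \<Rightarrow> 'n::finite mat \<Rightarrow> 'n mat set" where
  "proj_C k S = {T \<in> C_set k. \<forall>A\<in>C_set k. frob_dist S T \<le> frob_dist S A}"

definition f_obj :: "'n::finite mat \<Rightarrow> 'n mat \<Rightarrow> real" where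
  "f_obj S Sig = ln (det Sig) + trace (matrix_inv Sig ** S)"

definition h_obj :: "nat \<Rightarrow> real \<Rightarrow> 'n::finite mat \<Rightarrow> 'n mat \<Rightarrow> real" where
  "h_obj k \<rho> S Sig = f_obj S Sig + \<rho> / 2 * (dist_C k Sig)^2"

definition stationary :: "nat \<Rightarrow> real \<Rightarrow> 'n::finite mat \<Rightarrow> 'n mat \<Rightarrow> bool" where
  "stationary k \<rho> S Sig \<longleftrightarrow> pos_def Sig \<and>
     (\<exists>T\<in>proj_C k Sig. matrix_inv Sig - matrix_inv Sig ** S ** matrix_inv Sig
                        + \<rho> *\<^sub>R (Sig - T) = 0)"

end

theory Submission
  imports Defs
begin


lemma mm_add_r: "((A::real^'n^'n) + B) ** C = A ** C + B ** C"
  by (simp add: matrix_matrix_mult_def vec_eq_iff algebra_simps sum.distrib)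
lemma mm_sub_l: "(A::real^'n^'n) ** (B - C) = A ** B - A ** C"
  by (simp add: matrix_matrix_mult_def vec_eq_iff algebra_simps sum_subtractf)
lemma mm_sub_r: "((A::real^'n^'n) - B) ** C = A ** C - B ** C"
  by (simp add: matrix_matrix_mult_def vec_eq_iff algebra_simps sum_subtractf)
lemma mm_scale_l: "((k::real) *\<^sub>R (A::real^'n^'n)) ** B = k *\<^sub>R (A ** B)"
  by (simp add: matrix_matrix_mult_def vec_eq_iff algebra_simps sum_distrib_left)
lemma mm_scale_r: "(A::real^'n^'n) ** ((k::real) *\<^sub>R B) = k *\<^sub>R (A ** B)"
  by (simp add: matrix_scalar_ac mm_scale_l)
lemma tr_add: "transpose ((A::real^'n^'n) + B) = transpose A + transpose B"
  by (simp add: transpose_def vec_eq_iff)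
lemma tr_sub: "transpose ((A::real^'n^'n) - B) = transpose A - transpose B"
  by (simp add: transpose_def vec_eq_iff)
lemma trace_scale: "trace ((k::real) *\<^sub>R (A::real^'n^'n)) = k * trace A"
  by (simp add: trace_def sum_distrib_left)
lemma trace_transpose: "trace (transpose (A::real^'n^'n)) = trace A"
  by (simp add: trace_def transpose_def)
lemma mat_entry: "(mat (1::real) :: real^'n^'n) $ i $ j = (if i = j then 1 else 0)"
  by (simp add: mat_def)

lemma fip_trace: "(\<Sum>i\<in>UNIV. \<Sum>j\<in>UNIV. (X::real^'n^'n)$i$j * Y$i$j) = trace (transpose X ** Y)"
  unfolding trace_def matrix_matrix_mult_def transpose_def
  apply simp
  apply (rule sum.swap)
  done

lemma trace_entries: "trace ((X::real^'n^'n) ** Y) = (\<Sum>i\<in>UNIV. \<Sum>j\<in>UNIV. X$i$j * Y$j$i)"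
  unfolding trace_def matrix_matrix_mult_def by simp

lemma inv_props:
  assumes "invertible (A::real^'n^'n)"
  shows "A ** matrix_inv A = mat 1" "matrix_inv A ** A = mat 1"
proof -
  have "\<exists>A'. A ** A' = mat 1 \<and> A' ** A = mat 1" using assms unfolding invertible_def by blast
  from someI_ex[OF this] show "A ** matrix_inv A = mat 1" "matrix_inv A ** A = mat 1"
    unfolding matrix_inv_def by auto
qed

lemma quad_scale: "((r::real) *\<^sub>R x) \<bullet> ((B::real^'n^'n) *v (r *\<^sub>R x)) = r^2 * (x \<bullet> (B *v x))"
  by (simp add: matrix_vector_mult_scaleR power2_eq_square)

lemma inner_transpose: "(x::real^'n) \<bullet> (transpose M *v y) = (M *v x) \<bullet> y"
  unfolding inner_vec_def matrix_vector_mult_def transpose_def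
  apply (simp add: sum_distrib_left sum_distrib_right mult_ac)
  apply (subst sum.swap)
  apply simp
  done

lemma pos_def_invertible:
  assumes "pos_def (A::real^'n^'n)" shows "invertible A"
proof -
  have "inj ((*v) A)"
  proof (rule injI)
    fix x y assume "A *v x = A *v y"
    hence "A *v (x - y) = 0" by (simp add: matrix_vector_mult_diff_distrib)
    hence z: "(x - y) \<bullet> (A *v (x - y)) = 0" by simp
    show "x = y"
    proof (rule ccontr)
      assume "x \<noteq> y" hence "x - y \<noteq> 0" by simp
      with assms have "0 < (x - y) \<bullet> (A *v (x - y))" unfolding pos_def_def by blast
      with z show False by simp
    qed
  qed
  hence "det (matrix ((*v) A)) \<noteq> 0" using det_nz_iff_inj[OF matrix_vector_mul_linear] by blast
  hence "det A \<noteq> 0" by (simp add: matrix_of_matrix_vector_mul)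
  thus ?thesis by (simp add: invertible_det_nz)
qed


lemma tr_entry: "transpose (B::real^'n^'n) $ i $ j = B $ j $ i"
  by (simp add: transpose_def)

lemma sym_entry: "transpose (B::real^'n^'n) = B \<Longrightarrow> B $ j $ i = B $ i $ j"
  by (metis tr_entry)

lemma ax_quad: "axis i 1 \<bullet> ((B::real^'n^'n) *v axis j 1) = B $ i $ j"
  by (simp add: inner_axis' matrix_vector_mult_basis column_def)

lemma inv_sym:
  assumes "invertible (A::real^'n^'n)" "transpose A = A"
  shows "transpose (matrix_inv A) = matrix_inv A"
proof -
  let ?B = "matrix_inv A"
  have "transpose ?B ** A = mat 1"
    using inv_props(1)[OF assms(1)] assms(2)
    by (metis matrix_transpose_mul transpose_mat)
  hence "transpose ?B = transpose ?B ** (A ** ?B)"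
    using inv_props(1)[OF assms(1)] by (simp add: matrix_mul_rid)
  also have "\<dots> = ?B" using \<open>transpose ?B ** A = mat 1\<close>
    by (simp add: matrix_mul_assoc matrix_mul_lid)
  finally show ?thesis .
qed

lemma pos_def_inv:
  assumes "pos_def (A::real^'n^'n)" shows "pos_def (matrix_inv A)"
proof -
  have inv: "invertible A" using pos_def_invertible[OF assms] .
  have sym: "transpose A = A" using assms unfolding pos_def_def sym_mat_def by blast
  show ?thesis unfolding pos_def_def sym_mat_def
  proof (intro conjI allI impI)
    show "transpose (matrix_inv A) = matrix_inv A" using inv_sym[OF inv sym] .
  next
    fix x :: "real^'n" assume x: "x \<noteq> 0"
    define y where "y = matrix_inv A *v x"
    have Ay: "A *v y = x" unfolding y_def
      by (simp add: matrix_vector_mul_assoc inv_props(1)[OF inv] matrix_vector_mul_lid)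
    have "y \<noteq> 0" using Ay x by auto
    hence "0 < y \<bullet> (A *v y)" using assms unfolding pos_def_def by blast
    also have "y \<bullet> (A *v y) = x \<bullet> (matrix_inv A *v x)"
      using Ay y_def by (simp add: inner_commute)
    finally show "0 < x \<bullet> (matrix_inv A *v x)" .
  qed
qed

lemma det_pos:
  assumes "pos_def (A::real^'n^'n)" shows "det A > 0"
proof (rule ccontr)
  assume "\<not> det A > 0"
  hence d: "det A \<le> 0" by simp
  define P where "P s = (1 - s) *\<^sub>R (mat 1 :: real^'n^'n) + s *\<^sub>R A" for s
  have ent: "P s $ i $ j = (1 - s) * (mat 1 :: real^'n^'n) $ i $ j + s * A $ i $ j" for s i j
    by (simp add: P_def)
  have eq: "(\<lambda>s. det (P s)) = (\<lambda>s. \<Sum>p\<in>{p. p permutes (UNIV::'n set)}. of_int (sign p) *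
        (\<Prod>i\<in>UNIV. (1 - s) * (mat 1 :: real^'n^'n) $ i $ p i + s * A $ i $ p i))"
    by (simp add: det_def ent)
  have cont: "continuous_on {0..1} (\<lambda>s. det (P s))"
    unfolding eq by (intro continuous_intros)
  have "P 0 = mat 1" "P 1 = A" by (simp_all add: P_def)
  hence "det (P 1) \<le> 0" "0 \<le> det (P 0)" using d by simp_all
  then obtain s where s: "0 \<le> s" "s \<le> 1" "det (P s) = 0"
    using IVT2'[of "\<lambda>s. det (P s)" 1 0 0, OF _ _ _ cont] by auto
  have "pos_def (P s)" unfolding pos_def_def sym_mat_def
  proof (intro conjI allI impI)
    have "transpose A = A" using assms unfolding pos_def_def sym_mat_def by blast
    thus "transpose (P s) = P s" by (simp add: P_def tr_add transpose_scalar transpose_mat)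
  next
    fix x :: "real^'n" assume x: "x \<noteq> 0"
    have q: "x \<bullet> (P s *v x) = (1 - s) * (x \<bullet> x) + s * (x \<bullet> (A *v x))"
      by (simp add: P_def matrix_vector_mult_add_rdistrib scaleR_matrix_vector_assoc[symmetric]
          matrix_vector_mul_lid inner_add_right)
    have "0 < x \<bullet> x" using x by simp
    moreover have "0 < x \<bullet> (A *v x)" using assms x unfolding pos_def_def by blast
    ultimately have "0 < (1 - s) * (x \<bullet> x) + s * (x \<bullet> (A *v x))"
      using s by (cases "s = 1") (auto intro!: add_nonneg_pos add_pos_nonneg)
    thus "0 < x \<bullet> (P s *v x)" using q by simp
  qed
  hence "det (P s) \<noteq> 0" using pos_def_invertible invertible_det_nz by blast
  thus False using s by simp
qed

lemma psd_zero_diag: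
  fixes B :: "real^'n^'n"
  assumes psd: "\<forall>x. 0 \<le> x \<bullet> (B *v x)" and sym: "transpose B = B" and z: "B $ i $ i = 0"
  shows "B $ i $ j = 0"
proof (cases "j = i")
  case True thus ?thesis using z by simp
next
  case False
  define b where "b = B $ i $ j"
  define c where "c = B $ j $ j"
  have q: "0 \<le> 2 * t * b + c" for t
  proof -
    let ?x = "t *\<^sub>R axis i (1::real) + axis j 1"
    have "?x \<bullet> (B *v ?x) = t * t * B$i$i + t * B$i$j + t * B$j$i + B$j$j"
      by (simp add: matrix_vector_right_distrib matrix_vector_mult_scaleR inner_add_left
          inner_add_right ax_quad algebra_simps)
    also have "\<dots> = 2 * t * b + c" using z sym_entry[OF sym, of j i] b_def c_def by simp
    finally show ?thesis using psd by metis
  qed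
  show ?thesis
  proof (rule ccontr)
    assume "B $ i $ j \<noteq> 0" hence b0: "b \<noteq> 0" using b_def by simp
    have "0 \<le> 2 * (- (c + 1) / (2 * b)) * b + c" using q .
    also have "2 * (- (c + 1) / (2 * b)) * b + c = -1" using b0 by (simp add: field_simps)
    finally show False by simp
  qed
qed

lemma psd_diag_nonneg:
  fixes B :: "real^'n^'n"
  assumes psd: "\<forall>x. 0 \<le> x \<bullet> (B *v x)" shows "0 \<le> B $ i $ i"
  using psd ax_quad[of i B i] by metis


lemma outer_mv: "((\<chi> j k. b$j * b$k) :: real^'n^'n) *v x = (b \<bullet> x) *\<^sub>R b"
  by (simp add: vec_eq_iff matrix_vector_mult_def inner_vec_def sum_distrib_left mult_ac)

lemma psd_trace:
  fixes A :: "real^'n^'n"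
  assumes A: "\<forall>x. 0 \<le> x \<bullet> (A *v x)"
  shows "transpose B = B \<Longrightarrow> \<forall>x. 0 \<le> x \<bullet> (B *v x) \<Longrightarrow> 0 \<le> trace (A ** B)"
proof (induction "card {i. B$i$i \<noteq> 0}" arbitrary: B rule: less_induct)
  case less
  note sym = less.prems(1) and psd = less.prems(2)
  show ?case
  proof (cases "\<exists>i. B$i$i \<noteq> 0")
    case False
    hence "B = 0" using psd_zero_diag[OF psd sym] by (simp add: vec_eq_iff)
    thus ?thesis by (simp add: trace_def)
  next
    case True
    then obtain i where bi: "B$i$i \<noteq> 0" by blast
    define c where "c = B$i$i"
    have c: "c > 0" using psd_diag_nonneg[OF psd, of i] bi c_def by simp
    define b :: "real^'n" where "b = (\<chi> j. B$j$i)"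
    define Ob :: "real^'n^'n" where "Ob = (\<chi> j k. b$j * b$k)"
    define B' where "B' = B - (1/c) *\<^sub>R Ob"
    have Bi: "B *v axis i 1 = b"
      by (simp add: b_def matrix_vector_mult_basis column_def)
    have iB: "axis i 1 \<bullet> (B *v x) = b \<bullet> x" for x
    proof -
      have "axis i 1 \<bullet> (B *v x) = (transpose B *v axis i 1) \<bullet> x"
        by (metis inner_commute inner_transpose)
      thus ?thesis using sym Bi by simp
    qed
    have bax: "b \<bullet> axis i 1 = B$i$i"
      using inner_axis'[of i 1 b] by (simp add: inner_commute b_def)
    have symB': "transpose B' = B'"
      using sym by (simp add: B'_def tr_sub transpose_scalar, simp add: Ob_def transpose_def vec_eq_iff mult.commute)
    have psdB': "\<forall>x. 0 \<le> x \<bullet> (B' *v x)"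
    proof
      fix x :: "real^'n"
      define w where "w = x - ((b \<bullet> x) / c) *\<^sub>R axis i 1"
      have "w \<bullet> (B *v w) = x \<bullet> (B *v x) - 2 * ((b \<bullet> x) / c) * (b \<bullet> x) + ((b \<bullet> x) / c)^2 * c"
        unfolding w_def
        by (simp add: matrix_vector_mult_diff_distrib matrix_vector_mult_scaleR inner_diff_left
            inner_diff_right iB Bi c_def ax_quad bax inner_commute power2_eq_square algebra_simps)
      also have "\<dots> = x \<bullet> (B' *v x)"
        using c by (simp add: B'_def Ob_def matrix_vector_mult_diff_rdistrib
            scaleR_matrix_vector_assoc[symmetric] outer_mv inner_diff_right power2_eq_square field_simps bax c_def inner_commute)
      finally show "0 \<le> x \<bullet> (B' *v x)" using psd by metis
    qed
    have dB': "B' $ j $ j = B $ j $ j - (b$j)^2 / c" for j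
      by (simp add: B'_def Ob_def power2_eq_square)
    have sub: "{j. B'$j$j \<noteq> 0} \<subset> {j. B$j$j \<noteq> 0}"
    proof
      show "{j. B'$j$j \<noteq> 0} \<subseteq> {j. B$j$j \<noteq> 0}"
      proof
        fix j assume "j \<in> {j. B'$j$j \<noteq> 0}"
        show "j \<in> {j. B$j$j \<noteq> 0}"
        proof (rule ccontr)
          assume "j \<notin> {j. B$j$j \<noteq> 0}"
          hence "B$j$j = 0" by simp
          hence "B$j$i = 0" using psd_zero_diag[OF psd sym] by blast
          hence "b$j = 0" by (simp add: b_def)
          thus False using \<open>j \<in> {j. B'$j$j \<noteq> 0}\<close> \<open>B$j$j = 0\<close> dB'[of j] by simp
        qed
      qed
      have "B'$i$i = 0" using dB'[of i] c by (simp add: b_def c_def power2_eq_square)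
      thus "{j. B'$j$j \<noteq> 0} \<noteq> {j. B$j$j \<noteq> 0}" using bi by blast
    qed
    hence lt: "card {j. B'$j$j \<noteq> 0} < card {j. B$j$j \<noteq> 0}"
      by (simp add: psubset_card_mono)
    have ih: "0 \<le> trace (A ** B')" using less.hyps[OF lt symB' psdB'] .
    have tO: "trace (A ** Ob) = b \<bullet> (A *v b)"
      by (simp add: trace_entries Ob_def inner_vec_def matrix_vector_mult_def sum_distrib_left mult_ac)
    have "B = B' + (1/c) *\<^sub>R Ob" by (simp add: B'_def)
    hence "trace (A ** B) = trace (A ** B') + (1/c) * trace (A ** Ob)"
      by (simp add: matrix_add_ldistrib mm_scale_r trace_add trace_scale)
    also have "\<dots> \<ge> 0" using ih tO A c by simp
    finally show ?thesis .
  qed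
qed


lemma quad_trace_nonneg:
  fixes A X :: "real^'n^'n"
  assumes symA: "transpose A = A" and psdA: "\<forall>x. 0 \<le> x \<bullet> (A *v x)"
  shows "0 \<le> trace (transpose X ** A ** X ** A)"
proof -
  define B where "B = transpose X ** A ** X"
  have symB: "transpose B = B"
    unfolding B_def by (simp add: matrix_transpose_mul symA matrix_mul_assoc)
  have psdB: "\<forall>x. 0 \<le> x \<bullet> (B *v x)"
  proof
    fix x :: "real^'n"
    have "x \<bullet> (B *v x) = (X *v x) \<bullet> (A *v (X *v x))"
    proof -
      have "B *v x = transpose X *v (A *v (X *v x))" unfolding B_def by (simp only: matrix_vector_mul_assoc matrix_mul_assoc)
      thus ?thesis by (simp only: inner_transpose)
    qed
    thus "0 \<le> x \<bullet> (B *v x)" using psdA by simp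
  qed
  have "trace (transpose X ** A ** X ** A) = trace (A ** B)"
    unfolding B_def by (rule trace_mul_sym)
  thus ?thesis using psd_trace[OF psdA symB psdB] by simp
qed

lemma sylv_inj:
  fixes A X :: "real^'n^'n"
  assumes rho: "\<rho> > 0" and symA: "transpose A = A" and psdA: "\<forall>x. 0 \<le> x \<bullet> (A *v x)"
    and eq: "\<rho> *\<^sub>R X + A ** X ** A = 0"
  shows "X = 0"
proof -
  have "0 = trace (transpose X ** (\<rho> *\<^sub>R X + A ** X ** A))" using eq by (simp add: trace_def)
  also have "\<dots> = \<rho> * (\<Sum>i\<in>UNIV. \<Sum>j\<in>UNIV. X$i$j * X$i$j) + trace (transpose X ** A ** X ** A)"
    by (simp add: matrix_add_ldistrib mm_scale_r trace_add trace_scale fip_trace matrix_mul_assoc)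
  finally have "\<rho> * (\<Sum>i\<in>UNIV. \<Sum>j\<in>UNIV. X$i$j * X$i$j) \<le> 0"
    using quad_trace_nonneg[OF symA psdA, of X] by linarith
  hence "(\<Sum>i\<in>UNIV. \<Sum>j\<in>UNIV. X$i$j * X$i$j) \<le> 0" using rho
    by (simp add: mult_le_0_iff)
  moreover have "0 \<le> (\<Sum>i\<in>UNIV. \<Sum>j\<in>UNIV. X$i$j * X$i$j)" by (intro sum_nonneg) simp
  ultimately have z: "(\<Sum>i\<in>UNIV. \<Sum>j\<in>UNIV. X$i$j * X$i$j) = 0" by simp
  have "\<forall>i. (\<Sum>j\<in>UNIV. X$i$j * X$i$j) = 0"
    using z by (subst (asm) sum_nonneg_eq_0_iff) (auto intro: sum_nonneg)
  hence "\<forall>i j. X$i$j * X$i$j = 0"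
    by (subst (asm) sum_nonneg_eq_0_iff) auto
  thus ?thesis by (simp add: vec_eq_iff)
qed

lemma det_deriv:
  fixes M :: "real^'n^'n"
  shows "((\<lambda>t. det (mat 1 + t *\<^sub>R M)) has_real_derivative trace M) (at 0)"
proof -
  define P where "P = {p. p permutes (UNIV::'n set)}"
  define g where "g p i t = (if i = p i then 1 else 0) + t * M$i$(p i)" for p :: "'n \<Rightarrow> 'n" and i t
  define d where "d p = (\<Sum>i\<in>UNIV. M$i$(p i) * (\<Prod>j\<in>UNIV-{i}. g p j 0))" for p
  have eq: "(\<lambda>t. det (mat 1 + t *\<^sub>R M)) = (\<lambda>t. \<Sum>p\<in>P. of_int (sign p) * (\<Prod>i\<in>UNIV. g p i t))"
    by (simp add: det_def mat_entry P_def g_def)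
  have fac: "((\<lambda>t. g p i t) has_field_derivative M$i$(p i)) (at z)" for p i z
    unfolding g_def by (auto intro!: derivative_eq_intros)
  have pr: "((\<lambda>t. \<Prod>i\<in>UNIV. g p i t) has_field_derivative d p) (at 0)" for p
    unfolding d_def using has_field_derivative_prod[of UNIV "\<lambda>i t. g p i t" "\<lambda>i. M$i$(p i)" 0] fac
    by blast
  have D: "((\<lambda>t. \<Sum>p\<in>P. of_int (sign p) * (\<Prod>i\<in>UNIV. g p i t)) has_field_derivative
           (\<Sum>p\<in>P. of_int (sign p) * d p)) (at 0)"
    by (intro DERIV_sum DERIV_cmult pr)
  have d0: "d p = 0" if pP: "p \<in> P" and np: "p \<noteq> id" for p
  proof -
    have perm: "p permutes UNIV" using pP P_def by simp
    obtain k where k: "p k \<noteq> k" using np by (metis eq_id_iff)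
    have z: "\<And>i. (\<Prod>j\<in>UNIV-{i}. g p j 0) = 0"
    proof -
      fix i
      have "\<exists>j\<in>UNIV-{i}. g p j 0 = 0"
      proof (cases "k = i")
        case False thus ?thesis using k by (intro bexI[of _ k]) (auto simp: g_def)
      next
        case True
        have "p (p k) \<noteq> p k"
        proof
          assume "p (p k) = p k"
          hence "p k = k" using permutes_inj[OF perm] by (meson injD)
          thus False using k by simp
        qed
        thus ?thesis using k True by (intro bexI[of _ "p k"]) (auto simp: g_def)
      qed
      thus "(\<Prod>j\<in>UNIV-{i}. g p j 0) = 0" by (simp add: prod_zero_iff)
    qed
    show ?thesis unfolding d_def by (rule sum.neutral) (simp only: z mult_zero_right, blast)
  qed
  have "id \<in> P" by (simp add: P_def permutes_id)
  have finP: "finite P" unfolding P_def by (rule finite_permutations) simp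
  have "(\<Sum>p\<in>P. of_int (sign p) * d p) = of_int (sign (id::'n\<Rightarrow>'n)) * d id + (\<Sum>p\<in>P-{id}. of_int (sign p) * d p)"
    by (rule sum.remove[OF finP \<open>id \<in> P\<close>])
  also have "(\<Sum>p\<in>P-{id}. of_int (sign p) * d p) = 0"
    by (intro sum.neutral) (auto simp: d0)
  also have "d id = trace M"
    by (simp add: d_def g_def trace_def)
  finally have "(\<Sum>p\<in>P. of_int (sign p) * d p) = trace M" by (simp add: sign_id)
  thus ?thesis using D eq by simp
qed


lemma quad_lower:
  assumes "pos_def (A::real^'n^'n)"
  shows "\<exists>m>0. \<forall>x. m * (norm x)^2 \<le> x \<bullet> (A *v x)"
proof -
  have "\<exists>x0\<in>sphere (0::real^'n) 1. \<forall>y\<in>sphere 0 1. x0 \<bullet> (A *v x0) \<le> y \<bullet> (A *v y)"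
    by (rule continuous_attains_inf) (auto intro!: continuous_intros)
  then obtain x0 where x0: "norm x0 = 1" and mn: "\<And>y. norm y = 1 \<Longrightarrow> x0 \<bullet> (A *v x0) \<le> y \<bullet> (A *v y)"
    by auto
  have "x0 \<noteq> 0" using x0 by auto
  hence pos: "0 < x0 \<bullet> (A *v x0)" using assms unfolding pos_def_def by blast
  show ?thesis
  proof (intro exI[of _ "x0 \<bullet> (A *v x0)"] conjI allI pos)
    fix x :: "real^'n"
    show "(x0 \<bullet> (A *v x0)) * (norm x)^2 \<le> x \<bullet> (A *v x)"
    proof (cases "x = 0")
      case True thus ?thesis by simp
    next
      case False
      define u where "u = (1 / norm x) *\<^sub>R x"
      have nu: "norm u = 1" using False by (simp add: u_def)
      have xu: "x = norm x *\<^sub>R u" using False by (simp add: u_def)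
      have "x \<bullet> (A *v x) = (norm x)^2 * (u \<bullet> (A *v u))"
        by (subst xu, subst xu, rule quad_scale)
      thus ?thesis using mn[OF nu] by (simp add: mult.commute mult_right_mono)
    qed
  qed
qed

lemma quad_upper:
  fixes D :: "real^'n^'n"
  shows "\<exists>M\<ge>0. \<forall>x. \<bar>x \<bullet> (D *v x)\<bar> \<le> M * (norm x)^2"
proof -
  have "\<exists>x0\<in>sphere (0::real^'n) 1. \<forall>y\<in>sphere 0 1. \<bar>y \<bullet> (D *v y)\<bar> \<le> \<bar>x0 \<bullet> (D *v x0)\<bar>"
    by (rule continuous_attains_sup) (auto intro!: continuous_intros)
  then obtain x0 where mx0: "\<forall>y\<in>sphere 0 1. \<bar>y \<bullet> (D *v y)\<bar> \<le> \<bar>x0 \<bullet> (D *v x0)\<bar>"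
    by blast
  have mx: "\<And>y. norm y = 1 \<Longrightarrow> \<bar>y \<bullet> (D *v y)\<bar> \<le> \<bar>x0 \<bullet> (D *v x0)\<bar>"
    using mx0 by simp
  show ?thesis
  proof (intro exI[of _ "\<bar>x0 \<bullet> (D *v x0)\<bar>"] conjI allI)
    fix x :: "real^'n"
    show "\<bar>x \<bullet> (D *v x)\<bar> \<le> \<bar>x0 \<bullet> (D *v x0)\<bar> * (norm x)^2"
    proof (cases "x = 0")
      case True thus ?thesis by simp
    next
      case False
      define u where "u = (1 / norm x) *\<^sub>R x"
      have nu: "norm u = 1" using False by (simp add: u_def)
      have xu: "x = norm x *\<^sub>R u" using False by (simp add: u_def)
      have "x \<bullet> (D *v x) = (norm x)^2 * (u \<bullet> (D *v u))"
        by (subst xu, subst xu, rule quad_scale)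
      hence "\<bar>x \<bullet> (D *v x)\<bar> = (norm x)^2 * \<bar>u \<bullet> (D *v u)\<bar>" by (simp add: abs_mult)
      thus ?thesis using mx[OF nu] by (simp add: mult.commute[of "(norm x)^2"] mult_right_mono)
    qed
  qed simp
qed

lemma inv_entry_bound:
  fixes B :: "real^'n^'n"
  assumes c: "c > 0" and lb: "\<forall>x. c * (norm x)^2 \<le> x \<bullet> (B *v x)" and inv: "invertible B"
  shows "\<bar>matrix_inv B $ i $ j\<bar> \<le> 1 / c"
proof -
  define x where "x = matrix_inv B *v axis j 1"
  have Bx: "B *v x = axis j 1" unfolding x_def
    by (simp add: matrix_vector_mul_assoc inv_props(1)[OF inv] matrix_vector_mul_lid)
  have "c * (norm x)^2 \<le> x \<bullet> axis j 1" using lb Bx by metis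
  also have "\<dots> \<le> norm x * norm (axis j (1::real))" by (rule Cauchy_Schwarz_ineq2[THEN order_trans[OF abs_ge_self]])
  also have "\<dots> = norm x" by (simp add: norm_axis_1)
  finally have ineq: "c * (norm x)^2 \<le> norm x" .
  have nx: "norm x \<le> 1 / c"
  proof (cases "x = 0")
    case True thus ?thesis using c by simp
  next
    case False
    hence "0 < norm x" by simp
    hence "c * norm x \<le> 1" using ineq by (simp add: power2_eq_square)
    thus ?thesis using c by (simp add: field_simps)
  qed
  have "matrix_inv B $ i $ j = x $ i"
    by (simp add: x_def matrix_vector_mult_basis column_def)
  thus ?thesis using component_le_norm_cart[of x i] nx by simp
qed

lemma trace_bound:
  fixes N W :: "real^'n^'n"
  assumes "\<And>i j. \<bar>N $ i $ j\<bar> \<le> b"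
  shows "trace (N ** W) \<le> b * (\<Sum>i\<in>UNIV. \<Sum>j\<in>UNIV. \<bar>W $ j $ i\<bar>)"
proof -
  have "trace (N ** W) \<le> (\<Sum>i\<in>UNIV. \<Sum>j\<in>UNIV. \<bar>N$i$j * W$j$i\<bar>)"
    unfolding trace_entries by (intro sum_mono) auto
  also have "\<dots> \<le> (\<Sum>i\<in>UNIV. \<Sum>j\<in>UNIV. b * \<bar>W$j$i\<bar>)"
    by (intro sum_mono) (simp add: abs_mult mult_right_mono assms)
  finally show ?thesis by (simp add: sum_distrib_left)
qed

lemma frob_sq: "(frob (X::real^'n^'n))^2 = (\<Sum>i\<in>UNIV. \<Sum>j\<in>UNIV. (X$i$j)^2)"
  unfolding frob_def by (subst real_sqrt_pow2) (auto intro!: sum_nonneg)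

lemma frob_nonneg: "0 \<le> frob (X::real^'n^'n)"
  unfolding frob_def by (intro real_sqrt_ge_zero sum_nonneg zero_le_power2)




lemma mm_neg_r: "(X::real^'n^'n) ** (- Y) = - (X ** Y)"
  by (simp add: matrix_matrix_mult_def vec_eq_iff sum_negf)
lemma trace_neg: "trace (- (X::real^'n^'n)) = - trace X"
  by (simp add: trace_def sum_negf)

theorem proposition2:
  fixes S Sk Tk Shat :: "real^'n^'n" and \<rho> :: real and k :: nat
  assumes "CARD('n) \<ge> 2"
    and "pos_semidef S"
    and "\<rho> > 0"
    and "k \<le> CARD('n) choose 2"
    and "pos_def Sk"
    and "Tk \<in> proj_C k Sk"
    and "\<rho> *\<^sub>R Shat + matrix_inv Sk ** Shat ** matrix_inv Sk
           = \<rho> *\<^sub>R Tk + matrix_inv Sk ** S ** matrix_inv Sk"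
    and "\<not> stationary k \<rho> S Sk"
  shows "\<exists>s::nat. pos_def (Sk + (1 / 2^s) *\<^sub>R (Shat - Sk)) \<and>
           h_obj k \<rho> S (Sk + (1 / 2^s) *\<^sub>R (Shat - Sk)) < h_obj k \<rho> S Sk"
proof -
  note psdS = assms(2) and rho = assms(3) and pdSk = assms(5) and Tkp = assms(6)
    and eq = assms(7) and nst = assms(8)
  define A where "A = matrix_inv Sk"
  have invSk: "invertible Sk" using pos_def_invertible[OF pdSk] .
  have SkA: "Sk ** A = mat 1" and ASk: "A ** Sk = mat 1"
    using inv_props[OF invSk] by (simp_all add: A_def)
  have symSk: "transpose Sk = Sk" using pdSk by (simp add: pos_def_def sym_mat_def)
  have pdA: "pos_def A" using pos_def_inv[OF pdSk] by (simp add: A_def)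
  have symA: "transpose A = A" using pdA by (simp add: pos_def_def sym_mat_def)
  have psdA: "\<forall>x. 0 \<le> x \<bullet> (A *v x)"
  proof
    fix x :: "real^'n"
    show "0 \<le> x \<bullet> (A *v x)"
      using pdA unfolding pos_def_def by (cases "x = 0") (auto intro: less_imp_le)
  qed
  have symS: "transpose S = S" using psdS by (simp add: pos_semidef_def sym_mat_def)
  have TkC: "Tk \<in> C_set k" using Tkp by (simp add: proj_C_def)
  have symTk: "transpose Tk = Tk" using TkC by (simp add: C_set_def sym_mat_def)
  have eqA: "\<rho> *\<^sub>R Shat + A ** Shat ** A = \<rho> *\<^sub>R Tk + A ** S ** A"
    using eq by (simp add: A_def)
  have trASA: "transpose (A ** X ** A) = A ** transpose X ** A" for X
    by (simp add: matrix_transpose_mul symA matrix_mul_assoc)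
  have symShat: "transpose Shat = Shat"
  proof -
    have "transpose (\<rho> *\<^sub>R Shat + A ** Shat ** A) = transpose (\<rho> *\<^sub>R Tk + A ** S ** A)"
      using eqA by simp
    hence eqT: "\<rho> *\<^sub>R transpose Shat + A ** transpose Shat ** A = \<rho> *\<^sub>R Tk + A ** S ** A"
      by (simp add: tr_add transpose_scalar trASA symTk symS)
    have "\<rho> *\<^sub>R (Shat - transpose Shat) + A ** (Shat - transpose Shat) ** A
        = (\<rho> *\<^sub>R Shat + A ** Shat ** A) - (\<rho> *\<^sub>R transpose Shat + A ** transpose Shat ** A)"
      by (simp add: mm_sub_l mm_sub_r scaleR_diff_right algebra_simps)
    also have "\<dots> = 0" using eqA eqT by simp
    finally have "Shat - transpose Shat = 0" by (rule sylv_inj[OF rho symA psdA])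
    thus ?thesis by simp
  qed
  define D where "D = Shat - Sk"
  have symD: "transpose D = D" by (simp add: D_def tr_sub symShat symSk)
  define G where "G = A - A ** S ** A + \<rho> *\<^sub>R (Sk - Tk)"
  have ASkA: "A ** Sk ** A = A" by (simp add: ASk matrix_mul_lid)
  have GD: "\<rho> *\<^sub>R D + A ** D ** A = - G"
  proof -
    have "\<rho> *\<^sub>R D + A ** D ** A = (\<rho> *\<^sub>R Shat + A ** Shat ** A) - (\<rho> *\<^sub>R Sk + A ** Sk ** A)"
      by (simp add: D_def mm_sub_l mm_sub_r scaleR_diff_right algebra_simps)
    also have "\<dots> = - G" using eqA ASkA by (simp add: G_def scaleR_diff_right algebra_simps)
    finally show ?thesis .
  qed
  have Gnz: "G \<noteq> 0"
  proof
    assume "G = 0"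
    hence "stationary k \<rho> S Sk" unfolding stationary_def using pdSk Tkp
      by (auto simp: G_def A_def)
    thus False using nst by simp
  qed
  have Dnz: "D \<noteq> 0" using GD Gnz by auto
  define F where "F = (\<Sum>i\<in>UNIV. \<Sum>j\<in>UNIV. D$i$j * D$i$j)"
  define P where "P = (\<Sum>i\<in>UNIV. \<Sum>j\<in>UNIV. (Sk - Tk)$i$j * D$i$j)"
  have Fpos: "F > 0"
  proof -
    obtain i j where ij: "D$i$j \<noteq> 0" using Dnz by (auto simp: vec_eq_iff)
    have "D$i$j * D$i$j \<le> (\<Sum>j\<in>UNIV. D$i$j * D$i$j)"
      by (rule member_le_sum) auto
    also have "\<dots> \<le> F" unfolding F_def
      by (rule member_le_sum[of i UNIV "\<lambda>i. \<Sum>j\<in>UNIV. D$i$j * D$i$j"]) (auto intro: sum_nonneg)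
    finally show ?thesis using ij by (smt (verit) not_real_square_gt_zero)
  qed
  define L where "L = trace (A ** D) - trace (A ** D ** A ** S) + \<rho> * P"
  have Lneg: "L < 0"
  proof -
    have t1: "trace (D ** G) = L"
    proof -
      have "trace (D ** G) = trace (D ** A) - trace (D ** (A ** S ** A)) + \<rho> * trace (D ** (Sk - Tk))"
        by (simp add: G_def matrix_add_ldistrib mm_sub_l mm_scale_r trace_add trace_sub trace_scale)
      also have "trace (D ** A) = trace (A ** D)" by (rule trace_mul_sym)
      also have "trace (D ** (A ** S ** A)) = trace (A ** D ** A ** S)"
        using trace_mul_sym[of "D ** A ** S" A] by (simp add: matrix_mul_assoc)
      also have "trace (D ** (Sk - Tk)) = P"
        unfolding P_def using fip_trace[of D "Sk - Tk"] symD by (simp add: mult.commute)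
      finally show ?thesis by (simp add: L_def)
    qed
    have t2: "trace (D ** G) = - \<rho> * F - trace (transpose D ** A ** D ** A)"
    proof -
      have z: "G + (\<rho> *\<^sub>R D + A ** D ** A) = 0" using GD by simp
      have "trace (D ** G) + trace (D ** (\<rho> *\<^sub>R D + A ** D ** A)) = trace (D ** (G + (\<rho> *\<^sub>R D + A ** D ** A)))"
        by (simp only: trace_add matrix_add_ldistrib)
      also have "\<dots> = 0" by (simp only: z) (simp add: trace_def matrix_matrix_mult_def)
      finally have z2: "trace (D ** G) + trace (D ** (\<rho> *\<^sub>R D + A ** D ** A)) = 0" .
      have "trace (D ** (\<rho> *\<^sub>R D + A ** D ** A)) = \<rho> * trace (D ** D) + trace (D ** (A ** D ** A))"
        by (simp only: matrix_add_ldistrib mm_scale_r trace_add trace_scale)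
      hence "trace (D ** G) = - (\<rho> * trace (D ** D) + trace (D ** (A ** D ** A)))"
        using z2 by linarith
      also have "trace (D ** D) = F" unfolding F_def using fip_trace[of D D] symD by simp
      also have "trace (D ** (A ** D ** A)) = trace (transpose D ** A ** D ** A)"
        using symD by (simp add: matrix_mul_assoc)
      finally show ?thesis by simp
    qed
    have "0 \<le> trace (transpose D ** A ** D ** A)" by (rule quad_trace_nonneg[OF symA psdA])
    moreover have "0 < \<rho> * F" using rho Fpos by simp
    ultimately show ?thesis using t1 t2 by linarith
  qed

  obtain m where m: "m > 0" "\<forall>x. m * (norm x)^2 \<le> x \<bullet> (Sk *v x)"
    using quad_lower[OF pdSk] by blast
  obtain M where M: "M \<ge> 0" "\<forall>x. \<bar>x \<bullet> (D *v x)\<bar> \<le> M * (norm x)^2"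
    using quad_upper[of D] by blast
  define t0 where "t0 = m / (2 * (M + 1))"
  have t0: "t0 > 0" using m M by (simp add: t0_def)
  define Sg where "Sg t = Sk + t *\<^sub>R D" for t
  define W where "W = D ** A ** S ** A ** D"
  define K where "K = (2 / m) * (\<Sum>i\<in>UNIV. \<Sum>j\<in>UNIV. \<bar>W $ j $ i\<bar>)"
  define dl where "dl t = det (mat 1 + t *\<^sub>R (A ** D))" for t
  define B where "B t = (dl t - 1) / t - trace (A ** D ** A ** S) + t * K + \<rho> * P + t * \<rho> * F / 2" for t
  define fd where "fd = frob_dist Sk Tk"
  have dC_le: "dist_C k X \<le> frob_dist X Tk" for X
    unfolding dist_C_def
    by (rule cINF_lower[OF bdd_belowI2[where m=0] TkC]) (simp add: frob_dist_def frob_nonneg)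
  have dC_nn: "0 \<le> dist_C k X" for X :: "real^'n^'n"
    unfolding dist_C_def
  proof (rule cINF_greatest)
    show "(C_set k :: (real^'n^'n) set) \<noteq> {}" using TkC by blast
  qed (simp add: frob_dist_def frob_nonneg)
  have dC_Sk: "dist_C k Sk = fd"
  proof (rule antisym)
    show "dist_C k Sk \<le> fd" unfolding fd_def by (rule dC_le)
    show "fd \<le> dist_C k Sk" unfolding dist_C_def fd_def
    proof (rule cINF_greatest)
      show "(C_set k :: (real^'n^'n) set) \<noteq> {}" using TkC by blast
    qed (use Tkp in \<open>simp add: proj_C_def\<close>)
  qed
  have hSk: "h_obj k \<rho> S Sk = ln (det Sk) + trace (A ** S) + \<rho> / 2 * fd^2"
    by (simp add: h_obj_def f_obj_def dC_Sk A_def)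
  have detSk: "det Sk > 0" by (rule det_pos[OF pdSk])
  have key: "pos_def (Sg t) \<and> h_obj k \<rho> S (Sg t) - h_obj k \<rho> S Sk \<le> t * B t"
    if t: "0 < t" "t < t0" for t
  proof -
    have tM: "t * M \<le> m / 2"
    proof -
      have "t * M \<le> t0 * (M + 1)" using t M by (intro mult_mono) auto
      also have "\<dots> = m / 2" using M by (simp add: t0_def field_simps)
      finally show ?thesis .
    qed
    have lb: "\<forall>x. (m/2) * (norm x)^2 \<le> x \<bullet> (Sg t *v x)"
    proof
      fix x :: "real^'n"
      have e: "x \<bullet> (Sg t *v x) = x \<bullet> (Sk *v x) + t * (x \<bullet> (D *v x))"
        by (simp add: Sg_def matrix_vector_mult_add_rdistrib scaleR_matrix_vector_assoc[symmetric] inner_add_right)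
      have "- (x \<bullet> (D *v x)) \<le> M * (norm x)^2" using M(2) by (metis abs_le_D2)
      hence "t * (- (x \<bullet> (D *v x))) \<le> t * (M * (norm x)^2)" using t by (intro mult_left_mono) auto
      moreover have "t * (M * (norm x)^2) \<le> (m/2) * (norm x)^2"
        using mult_right_mono[OF tM, of "(norm x)^2"] by (simp add: mult.assoc)
      ultimately show "(m/2) * (norm x)^2 \<le> x \<bullet> (Sg t *v x)" using e m(2)[rule_format, of x] by linarith
    qed
    have pd: "pos_def (Sg t)" unfolding pos_def_def sym_mat_def
    proof (intro conjI allI impI)
      show "transpose (Sg t) = Sg t" by (simp add: Sg_def tr_add transpose_scalar symSk symD)
    next
      fix x :: "real^'n" assume "x \<noteq> 0"
      hence "0 < (m/2) * (norm x)^2" using m by simp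
      thus "0 < x \<bullet> (Sg t *v x)" using lb by (meson less_le_trans)
    qed
    have invS: "invertible (Sg t)" by (rule pos_def_invertible[OF pd])
    define N where "N = matrix_inv (Sg t)"
    have SN: "Sg t ** N = mat 1" and NS: "N ** Sg t = mat 1"
      using inv_props[OF invS] by (simp_all add: N_def)
    have Nb: "\<bar>N $ i $ j\<bar> \<le> 2 / m" for i j
      using inv_entry_bound[of "m/2" "Sg t" i j] m lb invS by (simp add: N_def)
    have ASg: "A ** Sg t = mat 1 + t *\<^sub>R (A ** D)"
      by (simp add: Sg_def matrix_add_ldistrib mm_scale_r ASk)
    have SgA: "Sg t ** A = mat 1 + t *\<^sub>R (D ** A)"
      by (simp add: Sg_def mm_add_r mm_scale_l SkA)
    have N1: "N = A - t *\<^sub>R (A ** D ** N)"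
    proof -
      have "A = (A ** Sg t) ** N" by (simp add: matrix_mul_assoc[symmetric] SN matrix_mul_rid)
      also have "\<dots> = N + t *\<^sub>R (A ** D ** N)" by (simp add: ASg mm_add_r mm_scale_l matrix_mul_lid)
      finally show ?thesis by (simp add: algebra_simps)
    qed
    have N2: "N = A - t *\<^sub>R (N ** D ** A)"
    proof -
      have "A = N ** (Sg t ** A)" by (simp add: matrix_mul_assoc NS matrix_mul_lid)
      also have "\<dots> = N + t *\<^sub>R (N ** D ** A)"
        by (simp add: SgA matrix_add_ldistrib mm_scale_r matrix_mul_rid matrix_mul_assoc)
      finally show ?thesis by (simp add: algebra_simps)
    qed
    have Nexp: "N = A - t *\<^sub>R (A ** D ** A) + (t * t) *\<^sub>R (A ** D ** N ** D ** A)"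
    proof -
      have "A ** D ** N = A ** D ** A - t *\<^sub>R (A ** D ** (N ** D ** A))"
        by (subst N2) (simp add: mm_sub_l mm_scale_r)
      hence "N = A - t *\<^sub>R (A ** D ** A - t *\<^sub>R (A ** D ** (N ** D ** A)))" using N1 by simp
      thus ?thesis by (simp add: algebra_simps matrix_mul_assoc)
    qed
    have trN: "trace (N ** S) = trace (A ** S) - t * trace (A ** D ** A ** S) + t^2 * trace (N ** W)"
    proof -
      have "trace (N ** S) = trace (A ** S) - t * trace (A ** D ** A ** S) + (t * t) * trace (A ** D ** N ** D ** A ** S)"
        by (subst Nexp) (simp add: mm_add_r mm_sub_r mm_scale_l trace_add trace_sub trace_scale)
      also have "trace (A ** D ** N ** D ** A ** S) = trace (N ** W)"
        using trace_mul_sym[of "A ** D" "N ** D ** A ** S"] by (simp add: W_def matrix_mul_assoc)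
      finally show ?thesis by (simp add: power2_eq_square)
    qed
    have trNW: "trace (N ** W) \<le> K" unfolding K_def by (rule trace_bound) (rule Nb)
    have detSg: "det (Sg t) = det Sk * dl t"
    proof -
      have "Sk ** (mat 1 + t *\<^sub>R (A ** D)) = Sg t"
        by (simp add: Sg_def matrix_add_ldistrib mm_scale_r matrix_mul_rid matrix_mul_assoc SkA matrix_mul_lid)
      thus ?thesis unfolding dl_def by (metis det_mul)
    qed
    have dpos: "dl t > 0" using det_pos[OF pd] detSk detSg by (simp add: zero_less_mult_iff)
    have lnd: "ln (det (Sg t)) \<le> ln (det Sk) + (dl t - 1)"
      using detSg detSk dpos ln_mult[of "det Sk" "dl t"] ln_le_minus_one[OF dpos] by simp
    have pen: "(frob_dist (Sg t) Tk)^2 = fd^2 + 2 * t * P + t^2 * F"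
    proof -
      have "(frob_dist (Sg t) Tk)^2 = (\<Sum>i\<in>UNIV. \<Sum>j\<in>UNIV. ((Sk - Tk)$i$j + t * D$i$j)^2)"
        by (simp add: frob_dist_def frob_sq Sg_def algebra_simps)
      also have "\<dots> = (\<Sum>i\<in>UNIV. \<Sum>j\<in>UNIV. ((Sk - Tk)$i$j)^2) + 2 * t * P + t^2 * F"
      proof -
        have sq: "(a + t * d)^2 = a^2 + 2 * t * (a * d) + t^2 * (d * d)" for a d :: real
          by (simp add: power2_eq_square algebra_simps)
        have "(\<Sum>i\<in>UNIV. \<Sum>j\<in>UNIV. ((Sk - Tk)$i$j + t * D$i$j)^2) =
              (\<Sum>i\<in>UNIV. \<Sum>j\<in>UNIV. ((Sk - Tk)$i$j)^2 + 2 * t * ((Sk - Tk)$i$j * D$i$j) + t^2 * (D$i$j * D$i$j))"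
          by (simp only: sq)
        also have "\<dots> = (\<Sum>i\<in>UNIV. \<Sum>j\<in>UNIV. ((Sk - Tk)$i$j)^2) + 2 * t * P + t^2 * F"
          unfolding P_def F_def by (simp only: sum.distrib sum_distrib_left)
        finally show ?thesis .
      qed
      also have "(\<Sum>i\<in>UNIV. \<Sum>j\<in>UNIV. ((Sk - Tk)$i$j)^2) = fd^2"
        by (simp add: fd_def frob_dist_def frob_sq)
      finally show ?thesis .
    qed
    have dC: "(dist_C k (Sg t))^2 \<le> (frob_dist (Sg t) Tk)^2"
      using dC_le dC_nn by (intro power_mono) auto
    have hSg: "h_obj k \<rho> S (Sg t) = ln (det (Sg t)) + trace (N ** S) + \<rho> / 2 * (dist_C k (Sg t))^2"
      by (simp add: h_obj_def f_obj_def N_def)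
    have "h_obj k \<rho> S (Sg t) - h_obj k \<rho> S Sk \<le>
          (dl t - 1) - t * trace (A ** D ** A ** S) + t^2 * K + \<rho> / 2 * (2 * t * P + t^2 * F)"
    proof -
      have "\<rho> / 2 * (dist_C k (Sg t))^2 \<le> \<rho> / 2 * (fd^2 + 2 * t * P + t^2 * F)"
        using dC pen rho by (intro mult_left_mono) auto
      moreover have "t^2 * trace (N ** W) \<le> t^2 * K" using trNW by (intro mult_left_mono) auto
      moreover have "\<rho> / 2 * (fd^2 + 2 * t * P + t^2 * F) = \<rho> / 2 * fd^2 + \<rho> / 2 * (2 * t * P + t^2 * F)"
        by (simp only: distrib_left add.assoc)
      ultimately show ?thesis using hSg hSk lnd trN by linarith
    qed
    also have "\<dots> = t * B t" using t by (simp add: B_def field_simps power2_eq_square)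
    finally show ?thesis using pd by simp
  qed
  have lim0: "((\<lambda>t. (dl t - 1) / t) \<longlongrightarrow> trace (A ** D)) (at_right 0)"
  proof -
    have "((\<lambda>y. (dl y - dl 0) / (y - 0)) \<longlongrightarrow> trace (A ** D)) (at 0)"
      using det_deriv[of "A ** D"] unfolding has_field_derivative_iff dl_def .
    moreover have "dl 0 = 1" by (simp add: dl_def)
    ultimately have "((\<lambda>t. (dl t - 1) / t) \<longlongrightarrow> trace (A ** D)) (at 0)" by simp
    thus ?thesis by (rule tendsto_mono[OF at_le[OF subset_UNIV]])
  qed
  have "((\<lambda>t. (dl t - 1) / t - trace (A ** D ** A ** S) + t * K + \<rho> * P + t * \<rho> * F / 2) \<longlongrightarrow>
         trace (A ** D) - trace (A ** D ** A ** S) + 0 * K + \<rho> * P + 0 * \<rho> * F / 2) (at_right 0)"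
    by (intro tendsto_intros lim0) auto
  hence limB: "(B \<longlongrightarrow> L) (at_right 0)" by (simp add: B_def[abs_def] L_def)
  have "eventually (\<lambda>t. B t < 0) (at_right 0)" using order_tendstoD(2)[OF limB Lneg] .
  then obtain b where b: "b > 0" "\<And>y. y > 0 \<Longrightarrow> y < b \<Longrightarrow> B y < 0"
    unfolding eventually_at_right_field by auto
  obtain s :: nat where s: "(1/2)^s < min b t0"
    using real_arch_pow_inv[of "min b t0" "1/2"] b t0 by auto
  define t :: real where "t = 1 / 2^s"
  have t: "0 < t" "t < b" "t < t0" using s by (simp_all add: t_def power_one_over)
  have k1: "pos_def (Sg t)" and k2: "h_obj k \<rho> S (Sg t) - h_obj k \<rho> S Sk \<le> t * B t"
    using key[OF t(1) t(3)] by auto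
  have "t * B t < 0" using t b(2)[OF t(1) t(2)] by (simp add: mult_pos_neg)
  hence "h_obj k \<rho> S (Sg t) < h_obj k \<rho> S Sk" using k2 by linarith
  moreover have "Sg t = Sk + (1 / 2^s) *\<^sub>R (Shat - Sk)" by (simp add: Sg_def D_def t_def)
  ultimately show ?thesis using k1 by metis
qed


end
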